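(* Let $s\in(0,\frac12)$ and suppose the jump kernels $j_1^{(n)}$ satisfy both the upper and lower bound with this $s$. There is a constant $c>0$ depending only on $s$ such that for all $n\in\mathbb{N}$ and all $u:V_1^{(n)}\to\mathbb{R}$, $$\mathcal{E}_1^{(n)}(u)\ge c\,\lambda_1\,[\operatorname{Ext}_1^{(n)}u]^2_{H^s([0,1])},$$ where $[v]^2_{H^s([0,1])}=\int_0^1\int_0^1\frac{|v(x)-v(y)|^2}{|x-y|^{1+2s}}dy\,dx$.
   Context: Index graph: vertices $\mathbb{N}$; vertex $i$ has edges $e_{i,2i-2}$ to $2i-2$ (only if $i\ge2$), $e_{i,2i-1},e'_{i,2i-1}$ to $2i-1$, $e_{i,2i}$ to $2i$, weights $r_e>0$ with $r_{e_{i,2i-1}}=r_{e'_{i,2i-1}}$. For $e$ from $i$ to $j$, $\phi_e(x)=\frac{j}{2i}x+s_e$, $s_e=0$ for $e\in\{e_{i,2i-1},e_{i,2i}\}$, $s_e=\frac1{2i}$ for $e\in\{e_{i,2i-2},e'_{i,2i-1}\}$. $E_1^{(n)}$: paths $\sigma=e_1\cdots e_n$ of length $n$ from vertex $1$; $\phi_\sigma=\phi_{e_1}\circ\cdots\circ\phi_{e_n}$, $\delta_\sigma=r_{e_1}\cdots r_{e_n}$. $V_1^{(n)}=\{k/2^n\}_{k=0}^{2^n}$; the wires $\{\phi_\sigma(0),\phi_\sigma(1)\}$ are all pairs of distinct points of $V_1^{(n)}$, each with a unique path $\sigma^{(n)}_{x,y}$. $U_1^{(n)}(x)=[x-2^{-n-1},x+2^{-n-1})\cap[0,1]$,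 $\mu_1^{(n)}(x)=|U_1^{(n)}(x)|$. Kernel $j_1^{(n)}(x,y)=(\delta_{\sigma^{(n)}_{x,y}}\mu_1^{(n)}(x)\mu_1^{(n)}(y))^{-1}$ for $x\ne y$, $0$ for $x=y$. $\mathcal{E}_1^{(n)}(u)=\sum_{x,y\in V_1^{(n)}}(u(x)-u(y))^2j_1^{(n)}(x,y)\mu_1^{(n)}(x)\mu_1^{(n)}(y)$. Kernel bounds: there are $0<\lambda_1\le\Lambda_1$ with $\lambda_1|x-y|^{-1-2s}\le j_1^{(n)}(x,y)\le\Lambda_1|x-y|^{-1-2s}$ for all $n\ge0$ and distinct $x,y\in V_1^{(n)}$. $\operatorname{Ext}_1^{(n)}u(x)=u(\bar x)$ where $\bar x\in V_1^{(n)}$ satisfies $x\in U_1^{(n)}(\bar x)$. *)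

theory Defs
  imports "HOL-Analysis.Analysis"
begin

text \<open>Edges leaving vertex i of the index graph, by kind:
  EK0 = e_{i,2i-2} (only if i >= 2), EK1 = e_{i,2i-1}, EK1' = e'_{i,2i-1}, EK2 = e_{i,2i}.\<close>
datatype ekind = EK0 | EK1 | EK1' | EK2

fun tgt :: "nat \<Rightarrow> ekind \<Rightarrow> nat" where
  "tgt i EK0 = 2*i - 2"
| "tgt i EK1 = 2*i - 1"
| "tgt i EK1' = 2*i - 1"
| "tgt i EK2 = 2*i"

fun shift :: "nat \<Rightarrow> ekind \<Rightarrow> real" where
  "shift i EK0 = 1 / (2 * real i)"
| "shift i EK1 = 0"
| "shift i EK1' = 1 / (2 * real i)"
| "shift i EK2 = 0"

definition phi_e :: "nat \<Rightarrow> ekind \<Rightarrow> real \<Rightarrow> real" where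
  "phi_e i k x = real (tgt i k) / (2 * real i) * x + shift i k"

fun path_ok :: "nat \<Rightarrow> ekind list \<Rightarrow> bool" where
  "path_ok i [] = True"
| "path_ok i (k # ks) = ((k = EK0 \<longrightarrow> i \<ge> 2) \<and> path_ok (tgt i k) ks)"

fun phi_path :: "nat \<Rightarrow> ekind list \<Rightarrow> real \<Rightarrow> real" where
  "phi_path i [] x = x"
| "phi_path i (k # ks) x = phi_e i k (phi_path (tgt i k) ks x)"

fun delta_path :: "(nat \<Rightarrow> ekind \<Rightarrow> real) \<Rightarrow> nat \<Rightarrow> ekind list \<Rightarrow> real" where
  "delta_path r i [] = 1"
| "delta_path r i (k # ks) = r i k * delta_path r (tgt i k) ks"

definition valid_weights :: "(nat \<Rightarrow> ekind \<Rightarrow> real) \<Rightarrow> bool" where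
  "valid_weights r \<longleftrightarrow>
     (\<forall>i\<ge>1. \<forall>k. (k = EK0 \<longrightarrow> i \<ge> 2) \<longrightarrow> r i k > 0) \<and> (\<forall>i\<ge>1. r i EK1 = r i EK1')"

definition E1 :: "nat \<Rightarrow> ekind list set" where
  "E1 n = {\<sigma>. length \<sigma> = n \<and> path_ok 1 \<sigma>}"

definition V1 :: "nat \<Rightarrow> real set" where
  "V1 n = {real k / 2 ^ n | k. k \<le> 2 ^ n}"

definition sigma_xy :: "nat \<Rightarrow> real \<Rightarrow> real \<Rightarrow> ekind list" where
  "sigma_xy n x y = (THE \<sigma>. \<sigma> \<in> E1 n \<and> {phi_path 1 \<sigma> 0, phi_path 1 \<sigma> 1} = {x, y})"

definition U1 :: "nat \<Rightarrow> real \<Rightarrow> real set" where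
  "U1 n x = {x - 1 / 2 ^ (n+1) ..< x + 1 / 2 ^ (n+1)} \<inter> {0..1}"

definition mu1 :: "nat \<Rightarrow> real \<Rightarrow> real" where
  "mu1 n x = measure lborel (U1 n x)"

definition j1 :: "(nat \<Rightarrow> ekind \<Rightarrow> real) \<Rightarrow> nat \<Rightarrow> real \<Rightarrow> real \<Rightarrow> real" where
  "j1 r n x y = (if x = y then 0
     else inverse (delta_path r 1 (sigma_xy n x y) * mu1 n x * mu1 n y))"

definition Energy1 :: "(nat \<Rightarrow> ekind \<Rightarrow> real) \<Rightarrow> nat \<Rightarrow> (real \<Rightarrow> real) \<Rightarrow> real" where
  "Energy1 r n u = (\<Sum>x\<in>V1 n. \<Sum>y\<in>V1 n. (u x - u y)^2 * j1 r n x y * mu1 n x * mu1 n y)"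

definition Ext1 :: "nat \<Rightarrow> (real \<Rightarrow> real) \<Rightarrow> real \<Rightarrow> real" where
  "Ext1 n u x = u (THE xb. xb \<in> V1 n \<and> x \<in> U1 n xb)"

definition Hs_seminorm_sq :: "real \<Rightarrow> (real \<Rightarrow> real) \<Rightarrow> ennreal" where
  "Hs_seminorm_sq s v = set_nn_integral lborel {0..1} (\<lambda>x.
       set_nn_integral lborel {0..1} (\<lambda>y.
         ennreal ((v x - v y)^2 / abs (x - y) powr (1 + 2 * s))))"

end

theory Submission
  imports Defs
begin

lemma hasint_abs_powr:
  fixes q h :: real
  assumes "0 < q" "q < 1" "0 \<le> h"
  shows "((\<lambda>x. \<bar>x\<bar> powr (-q)) has_integral (2 * (h powr (1-q) / (1-q)))) {-h..h}"
proof -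
  have A: "((\<lambda>x. x powr (-q)) has_integral (h powr (-q+1) / (-q+1))) {0..h}"
    using has_integral_powr_from_0[of "-q" h] assms by simp
  have A1: "((\<lambda>x. \<bar>x\<bar> powr (-q)) has_integral (h powr (1-q) / (1-q))) {0..h}"
  proof -
    have e: "-q+1 = 1-q" by simp
    show ?thesis by (rule has_integral_eq[OF _ A[unfolded e]]) simp
  qed
  have "((\<lambda>x. \<bar>-x\<bar> powr (-q)) has_integral (h powr (1-q) / (1-q))) {-h..-0}"
    using A1 by (subst has_integral_reflect_real) simp
  then have A2: "((\<lambda>x. \<bar>x\<bar> powr (-q)) has_integral (h powr (1-q) / (1-q))) {-h..0}" by simp
  have "((\<lambda>x. \<bar>x\<bar> powr (-q)) has_integral (h powr (1-q) / (1-q) + h powr (1-q) / (1-q))) {-h..h}"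
    by (rule has_integral_combine[OF _ _ A2 A1]) (use assms in auto)
  then show ?thesis by simp
qed

lemma int1d:
  fixes q h c :: real
  assumes "0 < q" "q < 1" "0 \<le> h"
  shows "(\<integral>\<^sup>+a. ennreal (\<bar>a - c\<bar> powr (-q)) * indicator {c-h..c+h} a \<partial>lborel)
     = ennreal (2 * (h powr (1-q) / (1-q)))"
proof -
  have "(\<integral>\<^sup>+a. ennreal (\<bar>a - c\<bar> powr (-q)) * indicator {c-h..c+h} a \<partial>lborel)
     = (\<integral>\<^sup>+x. ennreal (\<bar>(c + 1 * x) - c\<bar> powr (-q)) * indicator {c-h..c+h} (c + 1 * x) \<partial>lborel)"
    using nn_integral_real_affine[of "\<lambda>a. ennreal (\<bar>a - c\<bar> powr (-q)) * indicator {c-h..c+h} a" 1 c]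
    by simp
  also have "\<dots> = (\<integral>\<^sup>+x. ennreal (\<bar>x\<bar> powr (-q)) * indicator {-h..h} x \<partial>lborel)"
    by (intro nn_integral_cong) (auto simp: indicator_def)
  also have "\<dots> = ennreal (2 * (h powr (1-q) / (1-q)))"
    by (rule nn_integral_has_integral_lebesgue'[OF _ hasint_abs_powr[OF assms]]) simp
  finally show ?thesis .
qed

lemma pw:
  fixes q h d t1 t2 :: real
  assumes q: "0 < q" and t1: "0 < t1" "t1 \<le> h" and t2: "0 < t2" "t2 \<le> h" and hd: "h \<le> d"
  shows "(t1 + t2 + (d - h)) powr (-(2*q)) \<le> 2 powr (2*q) * d powr (-(2*q)) * h powr (2*q) * (t1 powr (-q) * t2 powr (-q))"
proof -
  define D where "D = t1 + t2 + (d - h)"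
  have hpos: "h > 0" using t1 by simp
  have dpos: "d > 0" using hd hpos by simp
  have Dpos: "D > 0" using t1 t2 hd by (simp add: D_def)
  show ?thesis
  proof (cases "2*h \<le> d")
    case True
    have "D \<ge> d/2" using True t1 t2 by (simp add: D_def)
    then have "D powr (-(2*q)) \<le> (d/2) powr (-(2*q))"
      using dpos q by (intro powr_mono2') auto
    also have "\<dots> = 2 powr (2*q) * d powr (-(2*q))"
      using dpos by (simp add: powr_divide powr_minus_divide)
    also have "\<dots> \<le> 2 powr (2*q) * d powr (-(2*q)) * (h powr (2*q) * (t1 powr (-q) * t2 powr (-q)))"
    proof -
      have "1 \<le> (h/t1) powr q" using t1 q by (intro ge_one_powr_ge_zero) auto
      moreover have "1 \<le> (h/t2) powr q" using t2 q by (intro ge_one_powr_ge_zero) auto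
      ultimately have "1*1 \<le> (h/t1) powr q * (h/t2) powr q"
        by (intro mult_mono) auto
      then have "1 \<le> (h/t1) powr q * (h/t2) powr q" by simp
      also have "(h/t1) powr q * (h/t2) powr q = h powr (2*q) * (t1 powr (-q) * t2 powr (-q))"
        using hpos t1 t2 by (simp add: powr_divide powr_minus_divide powr_add[symmetric])
      finally have H: "1 \<le> h powr (2*q) * (t1 powr (-q) * t2 powr (-q))" .
      show ?thesis using mult_left_mono[OF H, of "2 powr (2*q) * d powr (-(2*q))"] by simp
    qed
    finally show ?thesis by (simp add: D_def mult.assoc)
  next
    case False
    have "t1 * t2 \<le> D * D" using t1 t2 hd by (intro mult_mono) (auto simp: D_def)
    then have "D powr (-(2*q)) \<le> (t1*t2) powr (-q)"
    proof -
      have "D powr (-(2*q)) = (D*D) powr (-q)" using Dpos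
        by (simp add: powr_mult powr_add[symmetric])
      also have "\<dots> \<le> (t1*t2) powr (-q)" using \<open>t1 * t2 \<le> D * D\<close> t1 t2 q
        by (intro powr_mono2') auto
      finally show ?thesis .
    qed
    also have "\<dots> = 1 * (t1 powr (-q) * t2 powr (-q))" using t1 t2 by (simp add: powr_mult)
    also have "\<dots> \<le> (2 powr (2*q) * d powr (-(2*q)) * h powr (2*q)) * (t1 powr (-q) * t2 powr (-q))"
    proof (rule mult_right_mono)
      have "2 powr (2*q) * d powr (-(2*q)) * h powr (2*q) = (2*h/d) powr (2*q)"
        using hpos dpos by (simp add: powr_mult powr_divide powr_minus_divide)
      also have "\<dots> \<ge> 1" using False hd hpos q by (intro ge_one_powr_ge_zero) auto
      finally show "1 \<le> 2 powr (2*q) * d powr (-(2*q)) * h powr (2*q)" by simp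
    qed simp
    finally show ?thesis by (simp add: D_def)
  qed
qed

lemma V1_eq: "V1 n = (\<lambda>k. real k / 2 ^ n) ` {..2^n}"
  unfolding V1_def by auto

lemma V1_finite: "finite (V1 n)"
  unfolding V1_eq by simp

lemma U1_alt: "U1 n x = {x - (1/2^n)/2 ..< x + (1/2^n)/2} \<inter> {0..1}"
  unfolding U1_def by (simp add: field_simps)

lemma V1_dist:
  assumes "x \<in> V1 n" "y \<in> V1 n" "x \<noteq> y"
  shows "1/2^n \<le> \<bar>x - y\<bar>"
proof -
  obtain i j :: nat where x: "x = real i / 2^n" and y: "y = real j / 2^n"
    using assms unfolding V1_def by auto
  have "i \<noteq> j" using assms x y by auto
  then have "1 \<le> \<bar>real i - real j\<bar>" by linarith
  then have "1/2^n \<le> \<bar>real i - real j\<bar> / 2^n" by (simp add: divide_right_mono)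
  have "x - y = (real i - real j)/2^n" by (simp add: x y diff_divide_distrib)
  then have "\<bar>real i - real j\<bar> / 2^n = \<bar>x - y\<bar>" by (simp add: abs_divide)
  with \<open>1/2^n \<le> \<bar>real i - real j\<bar> / 2^n\<close> show ?thesis by simp
qed

lemma cell_unique:
  assumes "x \<in> V1 n" "y \<in> V1 n" "a \<in> U1 n x" "a \<in> U1 n y"
  shows "x = y"
proof (rule ccontr)
  assume "x \<noteq> y"
  then have "1/2^n \<le> \<bar>x - y\<bar>" using V1_dist assms by blast
  moreover have "\<bar>x - y\<bar> < 1/2^n" using assms(3,4) unfolding U1_alt by auto
  ultimately show False by simp
qed

lemma cell_exists:
  assumes "a \<in> {0..1}"
  shows "\<exists>x\<in>V1 n. a \<in> U1 n x"
proof -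
  define k where "k = nat \<lfloor>a * 2^n + 1/2\<rfloor>"
  have a: "0 \<le> a" "a \<le> 1" using assms by auto
  have fl0: "0 \<le> \<lfloor>a * 2^n + 1/2\<rfloor>" using a by simp
  have kr: "real k = of_int \<lfloor>a * 2^n + 1/2\<rfloor>" using fl0 by (simp add: k_def)
  have k1: "real k \<le> a * 2^n + 1/2" "a * 2^n + 1/2 < real k + 1"
    using kr by linarith+
  have "a * 2^n \<le> 2^n" using a by simp
  then have "real k < 2^n + 1" using k1 by linarith
  then have "real k < real (2^n + 1)" by simp
  then have "k < 2^n + 1" by (simp only: of_nat_less_iff)
  then have "k \<le> 2^n" by simp
  then have xV: "real k / 2^n \<in> V1 n" unfolding V1_def by auto
  have p: "(0::real) < 2^n" by simp
  have "real k / 2^n - (1/2^n)/2 \<le> a" using k1 p by (simp add: field_simps)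
  moreover have "a < real k / 2^n + (1/2^n)/2" using k1 p by (simp add: field_simps)
  ultimately have "a \<in> U1 n (real k / 2^n)" using a unfolding U1_alt by auto
  with xV show ?thesis by blast
qed

lemma Ext_val:
  assumes "x \<in> V1 n" "a \<in> U1 n x"
  shows "Ext1 n u a = u x"
proof -
  have "(THE xb. xb \<in> V1 n \<and> a \<in> U1 n xb) = x"
    by (rule the_equality) (use assms cell_unique in blast)+
  then show ?thesis unfolding Ext1_def by simp
qed

lemma mu_lower:
  assumes "x \<in> V1 n"
  shows "(1/2^n)/2 \<le> mu1 n x"
proof -
  define h :: real where "h = 1/2^n"
  obtain k where k: "k \<le> 2^n" "x = real k / 2^n" using assms unfolding V1_def by auto
  have hpos: "h > 0" by (simp add: h_def)
  have "real k \<le> real (2^n)" using k(1) by (simp only: of_nat_le_iff)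
  then have "real k \<le> 2^n" by simp
  then have x01: "0 \<le> x" "x \<le> 1" using k by auto
  have Ux: "U1 n x = {x - h/2..<x+h/2} \<inter> {0..1}" by (simp add: U1_alt h_def)
  have h1: "h \<le> 1" by (simp add: h_def)
  have sub: "U1 n x \<subseteq> {x - h/2..x + h/2}" unfolding U1_alt h_def by auto
  have fin: "U1 n x \<in> fmeasurable lborel"
  proof (rule fmeasurableI2[of "cbox (x - h/2) (x + h/2)"])
    show "U1 n x \<subseteq> cbox (x - h/2) (x + h/2)" using sub by simp
    show "U1 n x \<in> sets lborel" unfolding U1_def by measurable
  qed (rule fmeasurable_cbox)
  show ?thesis
  proof (cases "k = 2^n")
    case True
    then have "x = 1" using k by simp
    have "{x - h/2..<x} \<subseteq> U1 n x" unfolding Ux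
    proof (intro subsetI IntI)
      fix z assume "z \<in> {x - h/2..<x}"
      then show "z \<in> {x - h/2..<x+h/2}" "z \<in> {0..1}" using \<open>x = 1\<close> hpos h1 by auto
    qed
    then have "measure lborel {x - h/2..<x} \<le> measure lborel (U1 n x)"
      by (intro measure_mono_fmeasurable[OF _ _ fin]) auto
    then show ?thesis using hpos by (simp add: mu1_def h_def)
  next
    case False
    then have "k + 1 \<le> 2^n" using k by simp
    then have "real (k + 1) \<le> real (2^n)" by (simp only: of_nat_le_iff)
    then have "real k + 1 \<le> 2^n" by simp
    then have "x + h \<le> 1" using k by (simp add: h_def field_simps)
    then have "{x..<x + h/2} \<subseteq> U1 n x" unfolding Ux
    proof (intro subsetI IntI)
      fix z assume "z \<in> {x..<x + h/2}"
      then show "z \<in> {x - h/2..<x+h/2}" "z \<in> {0..1}" using \<open>x + h \<le> 1\<close> x01 hpos by auto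
    qed
    then have "measure lborel {x..<x + h/2} \<le> measure lborel (U1 n x)"
      by (intro measure_mono_fmeasurable[OF _ _ fin]) auto
    then show ?thesis using hpos by (simp add: mu1_def h_def)
  qed
qed

lemma geom:
  assumes "x \<in> V1 n" "y \<in> V1 n" "x \<noteq> y" "a \<in> U1 n x" "b \<in> U1 n y"
  defines "h \<equiv> 1/2^n"
  defines "c1 \<equiv> (if x < y then x + h/2 else x - h/2)"
  defines "c2 \<equiv> (if x < y then y - h/2 else y + h/2)"
  shows "\<bar>a - c1\<bar> \<le> h" "\<bar>b - c2\<bar> \<le> h"
    "\<bar>a - b\<bar> = \<bar>a - c1\<bar> + \<bar>b - c2\<bar> + (\<bar>x - y\<bar> - h)"
proof -
  have d: "h \<le> \<bar>x - y\<bar>" using V1_dist assms(1-3) h_def by blast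
  have A: "x - h/2 \<le> a" "a < x + h/2" "y - h/2 \<le> b" "b < y + h/2"
    using assms(4,5) unfolding U1_alt h_def by auto
  have "\<bar>a - c1\<bar> \<le> h \<and> \<bar>b - c2\<bar> \<le> h \<and> \<bar>a - b\<bar> = \<bar>a - c1\<bar> + \<bar>b - c2\<bar> + (\<bar>x - y\<bar> - h)"
  proof (cases "x < y")
    case True
    then have e: "c1 = x + h/2" "c2 = y - h/2" by (simp_all add: c1_def c2_def)
    have i1: "a \<le> c1" "c2 \<le> b" "a \<le> b" "x \<le> y" using A e d True by linarith+
    have "\<bar>x - y\<bar> = y - x" "\<bar>a - c1\<bar> = c1 - a" "\<bar>b - c2\<bar> = b - c2" "\<bar>a - b\<bar> = b - a"
      using i1 by linarith+
    then show ?thesis using A e d by linarith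
  next
    case False
    then have e: "c1 = x - h/2" "c2 = y + h/2" by (simp_all add: c1_def c2_def)
    have i1: "c1 \<le> a" "b \<le> c2" "b \<le> a" "y \<le> x" using A e d False by linarith+
    have "\<bar>x - y\<bar> = x - y" "\<bar>a - c1\<bar> = a - c1" "\<bar>b - c2\<bar> = c2 - b" "\<bar>a - b\<bar> = a - b"
      using i1 by linarith+
    then show ?thesis using A e d by linarith
  qed
  then show "\<bar>a - c1\<bar> \<le> h" "\<bar>b - c2\<bar> \<le> h"
    "\<bar>a - b\<bar> = \<bar>a - c1\<bar> + \<bar>b - c2\<bar> + (\<bar>x - y\<bar> - h)" by auto
qed

lemma self_in_cell: "x \<in> V1 n \<Longrightarrow> x \<in> U1 n x"
proof -
  assume "x \<in> V1 n"
  then obtain k where k: "k \<le> 2^n" "x = real k / 2^n" unfolding V1_def by auto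
  have "real k \<le> real (2^n)" using k(1) by (simp only: of_nat_le_iff)
  then have "real k \<le> 2^n" by simp
  then have "0 \<le> x" "x \<le> 1" using k by auto
  then show ?thesis unfolding U1_def by simp
qed

lemma pair_bound:
  fixes q :: real
  assumes q: "0 < q" "q < 1" and V: "x \<in> V1 n" "y \<in> V1 n" "x \<noteq> y"
  shows "(\<integral>\<^sup>+a. (\<integral>\<^sup>+b. ennreal (\<bar>a - b\<bar> powr (-(2*q))) * indicator (U1 n y) b \<partial>lborel)
              * indicator (U1 n x) a \<partial>lborel)
    \<le> ennreal (2 powr (2*q) * \<bar>x - y\<bar> powr (-(2*q)) * (1/2^n) powr (2*q)
               * (2 * ((1/2^n) powr (1-q) / (1-q)))^2)"
proof -
  define h :: real where "h = 1/2^n"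
  define c1 where "c1 = (if x < y then x + h/2 else x - h/2)"
  define c2 where "c2 = (if x < y then y - h/2 else y + h/2)"
  define d where "d = \<bar>x - y\<bar>"
  define M where "M = 2 powr (2*q) * d powr (-(2*q)) * h powr (2*q)"
  define I1 where "I1 = 2 * (h powr (1-q) / (1-q))"
  have hpos: "h > 0" by (simp add: h_def)
  have hd: "h \<le> d" using V1_dist[OF V] by (simp add: h_def d_def)
  have M0: "M \<ge> 0" by (simp add: M_def)
  have I10: "I1 \<ge> 0" using q by (simp add: I1_def)
  note G = geom[OF V, folded h_def, folded c1_def c2_def, folded d_def]
  have inner: "(\<integral>\<^sup>+b. ennreal (\<bar>a - b\<bar> powr (-(2*q))) * indicator (U1 n y) b \<partial>lborel)
      \<le> ennreal (M * I1) * ennreal (\<bar>a - c1\<bar> powr (-q))"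
    if a: "a \<in> U1 n x" "a \<noteq> c1" for a
  proof -
    have "(\<integral>\<^sup>+b. ennreal (\<bar>a - b\<bar> powr (-(2*q))) * indicator (U1 n y) b \<partial>lborel)
      \<le> (\<integral>\<^sup>+b. ennreal (M * \<bar>a - c1\<bar> powr (-q)) *
            (ennreal (\<bar>b - c2\<bar> powr (-q)) * indicator {c2-h..c2+h} b) \<partial>lborel)"
    proof (rule nn_integral_mono_AE)
      show "AE b in lborel. ennreal (\<bar>a - b\<bar> powr (-(2*q))) * indicator (U1 n y) b
          \<le> ennreal (M * \<bar>a - c1\<bar> powr (-q)) * (ennreal (\<bar>b - c2\<bar> powr (-q)) * indicator {c2-h..c2+h} b)"
        using AE_lborel_singleton[of c2]
      proof eventually_elim
        case (elim b)
        show ?case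
        proof (cases "b \<in> U1 n y")
          case True
          have t1: "0 < \<bar>a - c1\<bar>" "\<bar>a - c1\<bar> \<le> h" using G(1)[OF a(1) True] a(2) by auto
          have t2: "0 < \<bar>b - c2\<bar>" "\<bar>b - c2\<bar> \<le> h" using G(2)[OF a(1) True] elim by auto
          have e: "\<bar>a - b\<bar> = \<bar>a - c1\<bar> + \<bar>b - c2\<bar> + (d - h)" using G(3)[OF a(1) True] .
          have "\<bar>a - b\<bar> powr (-(2*q)) \<le> M * (\<bar>a - c1\<bar> powr (-q) * \<bar>b - c2\<bar> powr (-q))"
            unfolding e M_def by (rule pw[OF q(1) t1 t2 hd])
          then have "ennreal (\<bar>a - b\<bar> powr (-(2*q))) \<le> ennreal (M * \<bar>a - c1\<bar> powr (-q)) * ennreal (\<bar>b - c2\<bar> powr (-q))"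
            using M0 by (simp add: ennreal_mult[symmetric] mult.assoc)
          moreover have "b \<in> {c2-h..c2+h}" using t2 by auto
          ultimately show ?thesis using True by simp
        qed simp
      qed
    qed
    also have "\<dots> = ennreal (M * \<bar>a - c1\<bar> powr (-q)) *
            (\<integral>\<^sup>+b. ennreal (\<bar>b - c2\<bar> powr (-q)) * indicator {c2-h..c2+h} b \<partial>lborel)"
      by (rule nn_integral_cmult) measurable
    also have "\<dots> = ennreal (M * \<bar>a - c1\<bar> powr (-q)) * ennreal I1"
      using int1d[OF q less_imp_le[OF hpos]] by (simp add: I1_def)
    also have "\<dots> = ennreal (M * I1) * ennreal (\<bar>a - c1\<bar> powr (-q))"
      using M0 I10 by (simp add: ennreal_mult[symmetric] mult_ac)
    finally show ?thesis .
  qed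
  have "(\<integral>\<^sup>+a. (\<integral>\<^sup>+b. ennreal (\<bar>a - b\<bar> powr (-(2*q))) * indicator (U1 n y) b \<partial>lborel)
              * indicator (U1 n x) a \<partial>lborel)
     \<le> (\<integral>\<^sup>+a. ennreal (M * I1) * (ennreal (\<bar>a - c1\<bar> powr (-q)) * indicator {c1-h..c1+h} a) \<partial>lborel)"
  proof (rule nn_integral_mono_AE)
    show "AE a in lborel. (\<integral>\<^sup>+b. ennreal (\<bar>a - b\<bar> powr (-(2*q))) * indicator (U1 n y) b \<partial>lborel)
              * indicator (U1 n x) a
        \<le> ennreal (M * I1) * (ennreal (\<bar>a - c1\<bar> powr (-q)) * indicator {c1-h..c1+h} a)"
      using AE_lborel_singleton[of c1]
    proof eventually_elim
      case (elim a)
      show ?case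
      proof (cases "a \<in> U1 n x")
        case True
        have "y \<in> U1 n y" using self_in_cell[OF V(2)] .
        then have "\<bar>a - c1\<bar> \<le> h" using G(1)[OF True] by blast
        then have "a \<in> {c1-h..c1+h}" by auto
        then show ?thesis using True inner[OF True elim] by simp
      qed simp
    qed
  qed
  also have "\<dots> = ennreal (M * I1) * (\<integral>\<^sup>+a. ennreal (\<bar>a - c1\<bar> powr (-q)) * indicator {c1-h..c1+h} a \<partial>lborel)"
    by (rule nn_integral_cmult) measurable
  also have "\<dots> = ennreal (M * I1) * ennreal I1"
    using int1d[OF q less_imp_le[OF hpos]] by (simp add: I1_def)
  also have "\<dots> = ennreal (M * I1^2)"
    using M0 I10 by (simp add: ennreal_mult[symmetric] power2_eq_square mult_ac)
  finally show ?thesis by (simp add: M_def I1_def h_def d_def)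
qed

lemma U1_sets[measurable]: "U1 n x \<in> sets borel"
  unfolding U1_def by measurable

definition Kf :: "real \<Rightarrow> nat \<Rightarrow> real \<Rightarrow> real \<Rightarrow> ennreal" where
  "Kf p n x y = (\<integral>\<^sup>+a. (\<integral>\<^sup>+b. ennreal (\<bar>a - b\<bar> powr (-p)) * indicator (U1 n y) b \<partial>lborel)
              * indicator (U1 n x) a \<partial>lborel)"

lemma hs_decomp:
  "Hs_seminorm_sq s (Ext1 n u) \<le> (\<Sum>x\<in>V1 n. \<Sum>y\<in>V1 n. ennreal ((u x - u y)^2) * Kf (1 + 2 * s) n x y)"
proof -
  define p where "p = 1 + 2 * s"
  define V where "V = V1 n"
  have finV: "finite V" by (simp add: V_def V1_finite)
  define F where "F = (\<lambda>x y a. ennreal ((u x - u y)^2) *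
     ((\<integral>\<^sup>+b. ennreal (\<bar>a - b\<bar> powr (-p)) * indicator (U1 n y) b \<partial>lborel) * indicator (U1 n x) a))"
  have Fm: "F x y \<in> borel_measurable lborel" for x y
    unfolding F_def by measurable
  have pt: "(\<integral>\<^sup>+b. ennreal ((Ext1 n u a - Ext1 n u b)^2 / \<bar>a - b\<bar> powr p) * indicator {0..1} b \<partial>lborel)
      * indicator {0..1} a \<le> (\<Sum>x\<in>V. \<Sum>y\<in>V. F x y a)" for a
  proof (cases "a \<in> {0..1}")
    case False then show ?thesis by simp
  next
    case True
    then obtain x0 where x0: "x0 \<in> V" "a \<in> U1 n x0" using cell_exists unfolding V_def by blast
    have va: "Ext1 n u a = u x0" using Ext_val x0 unfolding V_def by blast
    have "(\<integral>\<^sup>+b. ennreal ((Ext1 n u a - Ext1 n u b)^2 / \<bar>a - b\<bar> powr p) * indicator {0..1} b \<partial>lborel)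
      \<le> (\<integral>\<^sup>+b. (\<Sum>y\<in>V. ennreal ((u x0 - u y)^2) * (ennreal (\<bar>a - b\<bar> powr (-p)) * indicator (U1 n y) b)) \<partial>lborel)"
    proof (rule nn_integral_mono)
      fix b
      show "ennreal ((Ext1 n u a - Ext1 n u b)^2 / \<bar>a - b\<bar> powr p) * indicator {0..1} b
        \<le> (\<Sum>y\<in>V. ennreal ((u x0 - u y)^2) * (ennreal (\<bar>a - b\<bar> powr (-p)) * indicator (U1 n y) b))"
      proof (cases "b \<in> {0..1}")
        case False then show ?thesis by simp
      next
        case True
        then obtain y0 where y0: "y0 \<in> V" "b \<in> U1 n y0" using cell_exists unfolding V_def by blast
        have vb: "Ext1 n u b = u y0" using Ext_val y0 unfolding V_def by blast
        have "ennreal ((Ext1 n u a - Ext1 n u b)^2 / \<bar>a - b\<bar> powr p) * indicator {0..1} b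
           = ennreal ((u x0 - u y0)^2) * (ennreal (\<bar>a - b\<bar> powr (-p)) * indicator (U1 n y0) b)"
          using True y0 by (simp add: va vb powr_minus_divide ennreal_mult[symmetric] divide_inverse)
        also have "\<dots> \<le> (\<Sum>y\<in>V. ennreal ((u x0 - u y)^2) * (ennreal (\<bar>a - b\<bar> powr (-p)) * indicator (U1 n y) b))"
          by (rule member_le_sum[OF y0(1) _ finV]) simp
        finally show ?thesis .
      qed
    qed
    also have "\<dots> = (\<Sum>y\<in>V. ennreal ((u x0 - u y)^2) * (\<integral>\<^sup>+b. ennreal (\<bar>a - b\<bar> powr (-p)) * indicator (U1 n y) b \<partial>lborel))"
      by (subst nn_integral_sum) (simp_all add: nn_integral_cmult)
    also have "\<dots> = (\<Sum>y\<in>V. F x0 y a)"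
      using x0 by (simp add: F_def)
    also have "\<dots> \<le> (\<Sum>x\<in>V. \<Sum>y\<in>V. F x y a)"
      by (rule member_le_sum[OF x0(1) _ finV]) simp
    finally show ?thesis using True by simp
  qed
  have "Hs_seminorm_sq s (Ext1 n u) \<le> (\<integral>\<^sup>+a. (\<Sum>x\<in>V. \<Sum>y\<in>V. F x y a) \<partial>lborel)"
    unfolding Hs_seminorm_sq_def p_def[symmetric] by (rule nn_integral_mono) (rule pt)
  also have "\<dots> = (\<Sum>x\<in>V. \<Sum>y\<in>V. integral\<^sup>N lborel (F x y))"
    using Fm by (simp add: nn_integral_sum)
  also have "\<dots> = (\<Sum>x\<in>V. \<Sum>y\<in>V. ennreal ((u x - u y)^2) * Kf (1 + 2 * s) n x y)"
    unfolding F_def Kf_def p_def by (simp add: nn_integral_cmult)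
  finally show ?thesis unfolding V_def .
qed

lemma Kf_bound:
  fixes s :: real
  assumes s: "0 < s" "s < 1/2" and V: "x \<in> V1 n" "y \<in> V1 n" "x \<noteq> y"
  shows "Kf (1 + 2 * s) n x y \<le> ennreal (4 * 2 powr (1 + 2 * s) / (1 - (1/2 + s))^2
           * \<bar>x - y\<bar> powr (-1 - 2 * s) * (1/2^n)^2)"
proof -
  define q where "q = 1/2 + s"
  define h :: real where "h = 1/2^n"
  have q: "0 < q" "q < 1" using s by (auto simp: q_def)
  have hpos: "h > 0" by (simp add: h_def)
  have p: "1 + 2 * s = 2 * q" by (simp add: q_def)
  have e1: "-(2 * q) = -1 - 2 * s" by (simp add: q_def)
  have "Kf (1 + 2 * s) n x y \<le> ennreal (2 powr (2*q) * \<bar>x - y\<bar> powr (-(2*q)) * h powr (2*q)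
               * (2 * (h powr (1-q) / (1-q)))^2)"
    unfolding Kf_def p h_def by (rule pair_bound[OF q V])
  also have "2 powr (2*q) * \<bar>x - y\<bar> powr (-(2*q)) * h powr (2*q) * (2 * (h powr (1-q) / (1-q)))^2
      = 4 * 2 powr (2*q) / (1-q)^2 * \<bar>x - y\<bar> powr (-(2*q)) * (h powr (2*q) * (h powr (1-q))^2)"
    by (simp add: power2_eq_square field_simps)
  also have "h powr (2*q) * (h powr (1-q))^2 = h^2"
  proof -
    have "(h powr (1-q))^2 = h powr ((1-q) + (1-q))" unfolding power2_eq_square powr_add ..
    then have "h powr (2*q) * (h powr (1-q))^2 = h powr (2*q + ((1-q) + (1-q)))" unfolding powr_add[of h "2*q"] by simp
    also have "2*q + ((1-q) + (1-q)) = 2" by simp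
    also have "h powr 2 = h^2" using hpos by (simp add: powr_numeral)
    finally show ?thesis .
  qed
  finally have G: "Kf (1 + 2 * s) n x y \<le> ennreal (4 * 2 powr (2*q) / (1-q)^2 * \<bar>x - y\<bar> powr (-(2*q)) * h^2)" .
  have e2: "-(1 + 2 * s) = -1 - 2 * s" by simp
  show ?thesis using G[unfolded p[symmetric] e2] unfolding h_def q_def .
qed

theorem lemma5p11:
  fixes s :: real
  assumes "0 < s" and "s < 1/2"
  shows "\<exists>c>0. \<forall>r lam1 Lam1. valid_weights r \<and> 0 < lam1 \<and> lam1 \<le> Lam1 \<and>
      (\<forall>n. \<forall>x\<in>V1 n. \<forall>y\<in>V1 n. x \<noteq> y \<longrightarrow>
         lam1 * \<bar>x - y\<bar> powr (-1 - 2 * s) \<le> j1 r n x y \<and>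
         j1 r n x y \<le> Lam1 * \<bar>x - y\<bar> powr (-1 - 2 * s))
    \<longrightarrow> (\<forall>n u. ennreal (c * lam1) * Hs_seminorm_sq s (Ext1 n u) \<le> ennreal (Energy1 r n u))"
proof -
  define B where "B = 4 * 2 powr (1 + 2 * s) / (1 - (1/2 + s))^2"
  have Bpos: "B > 0" using assms by (simp add: B_def)
  define C where "C = 4 * B"
  have Cpos: "C > 0" using Bpos by (simp add: C_def)
  show ?thesis
  proof (intro exI[of _ "1/C"] conjI allI impI)
    show "0 < 1/C" using Cpos by simp
    fix r lam1 Lam1 n u
    assume H: "valid_weights r \<and> 0 < lam1 \<and> lam1 \<le> Lam1 \<and>
      (\<forall>n. \<forall>x\<in>V1 n. \<forall>y\<in>V1 n. x \<noteq> y \<longrightarrow>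
         lam1 * \<bar>x - y\<bar> powr (-1 - 2 * s) \<le> j1 r n x y \<and>
         j1 r n x y \<le> Lam1 * \<bar>x - y\<bar> powr (-1 - 2 * s))"
    have lam: "0 < lam1" using H by simp
    define T where "T = (\<lambda>x y. (u x - u y)^2 * j1 r n x y * mu1 n x * mu1 n y)"
    have mu0: "x \<in> V1 n \<Longrightarrow> 0 \<le> mu1 n x" for x
      by (rule order_trans[OF _ mu_lower[of x n]]) simp_all
    have j0: "x \<in> V1 n \<Longrightarrow> y \<in> V1 n \<Longrightarrow> 0 \<le> j1 r n x y" for x y
    proof (cases "x = y")
      case True then show ?thesis by (simp add: j1_def)
    next
      case False
      assume "x \<in> V1 n" "y \<in> V1 n"
      then have "lam1 * \<bar>x - y\<bar> powr (-1 - 2 * s) \<le> j1 r n x y" using H False by blast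
      moreover have "0 \<le> lam1 * \<bar>x - y\<bar> powr (-1 - 2 * s)" using lam by simp
      ultimately show ?thesis by linarith
    qed
    have T0: "x \<in> V1 n \<Longrightarrow> y \<in> V1 n \<Longrightarrow> 0 \<le> T x y" for x y
      unfolding T_def using mu0 j0 by simp
    have termb: "ennreal ((u x - u y)^2) * Kf (1 + 2 * s) n x y \<le> ennreal (C / lam1 * T x y)"
      if xy: "x \<in> V1 n" "y \<in> V1 n" for x y
    proof (cases "x = y")
      case True then show ?thesis by simp
    next
      case False
      define h :: real where "h = 1/2^n"
      define d where "d = \<bar>x - y\<bar> powr (-1 - 2 * s)"
      have jl: "lam1 * d \<le> j1 r n x y" using H False xy unfolding d_def by blast
      have d0: "0 \<le> d" by (simp add: d_def)
      have "ennreal ((u x - u y)^2) * Kf (1 + 2 * s) n x y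
          \<le> ennreal ((u x - u y)^2) * ennreal (B * d * h^2)"
        using Kf_bound[OF assms xy False] by (intro mult_left_mono) (auto simp: B_def d_def h_def)
      also have "\<dots> = ennreal ((u x - u y)^2 * (B * d * h^2))"
        using Bpos d0 by (subst ennreal_mult) auto
      also have "\<dots> \<le> ennreal (C / lam1 * T x y)"
      proof (rule ennreal_leI)
        have m1: "h/2 \<le> mu1 n x" "h/2 \<le> mu1 n y" using mu_lower xy by (auto simp: h_def)
        have hpos: "0 < h" by (simp add: h_def)
        have hh: "h^2 \<le> 4 * (mu1 n x * mu1 n y)"
        proof -
          have "(h/2) * (h/2) \<le> mu1 n x * mu1 n y" using m1 hpos by (intro mult_mono) auto
          then show ?thesis by (simp add: power2_eq_square)
        qed
        have dj: "d \<le> j1 r n x y / lam1" using jl lam by (simp add: field_simps)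
        have "B * d * h^2 \<le> B * (j1 r n x y / lam1) * (4 * (mu1 n x * mu1 n y))"
          using Bpos d0 hh dj j0[OF xy] lam by (intro mult_mono) auto
        also have "\<dots> = C / lam1 * (j1 r n x y * mu1 n x * mu1 n y)"
          by (simp add: C_def field_simps)
        finally have "B * d * h^2 \<le> C / lam1 * (j1 r n x y * mu1 n x * mu1 n y)" .
        then have "(u x - u y)^2 * (B * d * h^2) \<le> (u x - u y)^2 * (C / lam1 * (j1 r n x y * mu1 n x * mu1 n y))"
          by (intro mult_left_mono) auto
        then show "(u x - u y)^2 * (B * d * h^2) \<le> C / lam1 * T x y"
          by (simp add: T_def mult_ac)
      qed
      finally show ?thesis .
    qed
    have "Hs_seminorm_sq s (Ext1 n u) \<le> (\<Sum>x\<in>V1 n. \<Sum>y\<in>V1 n. ennreal ((u x - u y)^2) * Kf (1 + 2 * s) n x y)"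
      by (rule hs_decomp)
    also have "\<dots> \<le> (\<Sum>x\<in>V1 n. \<Sum>y\<in>V1 n. ennreal (C / lam1 * T x y))"
      by (intro sum_mono termb)
    also have "\<dots> = ennreal (C / lam1 * Energy1 r n u)"
    proof -
      have "(\<Sum>x\<in>V1 n. \<Sum>y\<in>V1 n. ennreal (C / lam1 * T x y)) = (\<Sum>x\<in>V1 n. ennreal (\<Sum>y\<in>V1 n. C / lam1 * T x y))"
        using T0 Cpos lam by (intro sum.cong refl sum_ennreal) auto
      also have "\<dots> = ennreal (\<Sum>x\<in>V1 n. \<Sum>y\<in>V1 n. C / lam1 * T x y)"
        using T0 Cpos lam by (intro sum_ennreal sum_nonneg) auto
      also have "(\<Sum>x\<in>V1 n. \<Sum>y\<in>V1 n. C / lam1 * T x y) = C / lam1 * Energy1 r n u"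
        by (simp add: Energy1_def T_def sum_distrib_left mult_ac)
      finally show ?thesis .
    qed
    finally have Hle: "Hs_seminorm_sq s (Ext1 n u) \<le> ennreal (C / lam1 * Energy1 r n u)" .
    have E0: "0 \<le> Energy1 r n u"
      unfolding Energy1_def using T0 by (intro sum_nonneg) (auto simp: T_def mult_ac)
    have "ennreal (1/C * lam1) * Hs_seminorm_sq s (Ext1 n u) \<le> ennreal (1/C * lam1) * ennreal (C / lam1 * Energy1 r n u)"
      by (rule mult_left_mono[OF Hle]) simp
    also have "\<dots> = ennreal (1/C * lam1 * (C / lam1 * Energy1 r n u))"
      using Cpos lam E0 by (subst ennreal_mult) auto
    also have "1/C * lam1 * (C / lam1 * Energy1 r n u) = Energy1 r n u"
      using Cpos lam by (simp add: field_simps)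
    finally show "ennreal (1/C * lam1) * Hs_seminorm_sq s (Ext1 n u) \<le> ennreal (Energy1 r n u)" .
  qed
qed

end
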